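(* For any non-hierarchical query $Q$, $\mathsf{w}(\widehat Q)\ge\frac32$, where $\widehat Q$ is the multivariate extension of $Q$.
   Context: A query is a full conjunctive query $Q = R_1(\mathbf X_1)\wedge\cdots\wedge R_k(\mathbf X_k)$. For a variable $X$, $\mathrm{at}(X)$ is the set of atoms containing $X$; $Q$ is hierarchical if for any two variables $X,Y$, either $\mathrm{at}(X)\subseteq\mathrm{at}(Y)$, $\mathrm{at}(Y)\subseteq\mathrm{at}(X)$, or $\mathrm{at}(X)\cap\mathrm{at}(Y)=\emptyset$. Multivariate extension: take fresh variables $Z_1,\dots,Z_k$. For a permutation $\sigma$ of $[k]$, the component $\widehat Q_\sigma$ replaces each atom $R_{\sigma_i}(\mathbf X_{\sigma_i})$ by $\widehat R_{\sigma_i}(Z_1,\dots,Z_i,\mathbf X_{\sigma_i})$; $\widehat Q$ is the union of all components. Fractional hypertree width $\mathsf{w}(P)$ of a query $P$: minimum over tree decompositions of $P$ (trees with bags of variables covering every atom schema, the bags containing any variable forming a connected subtree) of the maximum over bags $B$ of the fractional edge cover number of $P$ restricted to $B$ (each atom schema intersected with $B$). For a union of queries, $\mathsf{w}$ is the maximum over the queries. *)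

theory Defs
  imports Complex_Main "HOL-Combinatorics.Permutations"
begin

text \<open>A full conjunctive query is represented by the list of its atom schemas:
  atom number i has variable set Q ! i. Relation symbols do not affect
  hierarchy or width, so only the hypergraph of the query is kept.\<close>

type_synonym 'v query = "'v set list"

definition atoms_of :: "'v query \<Rightarrow> 'v \<Rightarrow> nat set" where
  "atoms_of Q x = {i. i < length Q \<and> x \<in> Q ! i}"

definition hierarchical :: "'v query \<Rightarrow> bool" where
  "hierarchical Q \<longleftrightarrow> (\<forall>x y. atoms_of Q x \<subseteq> atoms_of Q y \<or> atoms_of Q y \<subseteq> atoms_of Q x
      \<or> atoms_of Q x \<inter> atoms_of Q y = {})"

definition qvars :: "'v query \<Rightarrow> 'v set" where
  "qvars Q = \<Union> (set Q)"

text \<open>Component of the multivariate extension for a permutation sigma of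
  the atom indices (0-based): position i gets the fresh variables
  Z_0,...,Z_i (encoded as Inr 0..Inr i) plus the variables of atom sigma i.\<close>

definition mv_component :: "'v query \<Rightarrow> (nat \<Rightarrow> nat) \<Rightarrow> ('v + nat) query" where
  "mv_component Q \<sigma> = map (\<lambda>i. Inr ` {..i} \<union> Inl ` (Q ! \<sigma> i)) [0..<length Q]"

definition frac_edge_cover :: "'v query \<Rightarrow> 'v set \<Rightarrow> real" where
  "frac_edge_cover Q B = Inf {(\<Sum>i<length Q. w i) | w.
      (\<forall>i. 0 \<le> w i) \<and>
      (\<forall>x\<in>B. (\<Sum>i\<in>{i. i < length Q \<and> x \<in> Q ! i \<inter> B}. w i) \<ge> 1)}"

definition edge_rel :: "nat set set \<Rightarrow> nat set \<Rightarrow> (nat \<times> nat) set" where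
  "edge_rel E S = {(a, b). {a, b} \<in> E \<and> a \<in> S \<and> b \<in> S}"

definition connected_in :: "nat set set \<Rightarrow> nat set \<Rightarrow> bool" where
  "connected_in E S \<longleftrightarrow> (\<forall>u\<in>S. \<forall>v\<in>S. (u, v) \<in> (edge_rel E S)\<^sup>*)"

definition is_tree :: "nat set \<Rightarrow> nat set set \<Rightarrow> bool" where
  "is_tree N E \<longleftrightarrow> finite N \<and> N \<noteq> {} \<and>
     (\<forall>e\<in>E. \<exists>a b. a \<in> N \<and> b \<in> N \<and> a \<noteq> b \<and> e = {a, b}) \<and>
     connected_in E N \<and> card E = card N - 1"

definition is_tree_decomp :: "'v query \<Rightarrow> nat set \<Rightarrow> nat set set \<Rightarrow> (nat \<Rightarrow> 'v set) \<Rightarrow> bool" where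
  "is_tree_decomp P N E bag \<longleftrightarrow> is_tree N E \<and>
     (\<forall>t\<in>N. bag t \<subseteq> qvars P) \<and>
     (\<forall>A\<in>set P. \<exists>t\<in>N. A \<subseteq> bag t) \<and>
     (\<forall>x. connected_in E {t\<in>N. x \<in> bag t})"

definition fhw :: "'v query \<Rightarrow> real" where
  "fhw P = Inf {Max ((\<lambda>t. frac_edge_cover P (bag t)) ` N) | N E bag. is_tree_decomp P N E bag}"

text \<open>Width of the multivariate extension (union of all components): maximum over components.\<close>

definition fhw_mv_ext :: "'v query \<Rightarrow> real" where
  "fhw_mv_ext Q = Max {fhw (mv_component Q \<sigma>) | \<sigma>. \<sigma> permutes {..<length Q}}"

end

theory Submission
  imports Defs
begin

definition ein :: "nat set set \<Rightarrow> nat set \<Rightarrow> nat set set" where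
  "ein E S = {e\<in>E. e \<subseteq> S}"

lemma cross_edge:
  assumes "(u, s) \<in> (edge_rel E V)\<^sup>*" "u \<notin> S" "s \<in> S"
  shows "\<exists>a b. {a, b} \<in> E \<and> a \<in> V \<and> b \<in> V \<and> a \<notin> S \<and> b \<in> S"
  using assms
proof (induction rule: rtrancl_induct)
  case base
  then show ?case by simp
next
  case (step y z)
  show ?case
  proof (cases "y \<in> S")
    case True
    then show ?thesis using step by blast
  next
    case False
    then show ?thesis using step by (auto simp: edge_rel_def)
  qed
qed

lemma count_lemma:
  assumes "finite E" "finite V"
  shows "S \<subseteq> V \<Longrightarrow> (\<forall>v\<in>V. \<exists>s\<in>S. (v, s) \<in> (edge_rel E V)\<^sup>*) \<Longrightarrow>
    card (V - S) \<le> card {e\<in>E. e \<subseteq> V \<and> \<not> e \<subseteq> S}"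
proof (induction "card (V - S)" arbitrary: S)
  case 0
  then show ?case by simp
next
  case (Suc n S)
  then have "V - S \<noteq> {}" by auto
  then obtain v where v: "v \<in> V" "v \<notin> S" by auto
  then obtain s where "s \<in> S" "(v, s) \<in> (edge_rel E V)\<^sup>*" using Suc.prems by blast
  then obtain a b where ab: "{a, b} \<in> E" "a \<in> V" "b \<in> V" "a \<notin> S" "b \<in> S"
    using cross_edge v by metis
  let ?S = "insert a S"
  have e: "V - ?S = (V - S) - {a}" by auto
  have c: "n = card (V - ?S)" unfolding e using Suc.hyps(2) ab assms
    by (subst card_Diff_singleton) auto
  have "card (V - ?S) \<le> card {e\<in>E. e \<subseteq> V \<and> \<not> e \<subseteq> ?S}"
  proof (rule Suc.hyps(1)[OF c])
    show "?S \<subseteq> V" using Suc.prems(1) ab(2) by simp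
    show "\<forall>v\<in>V. \<exists>s\<in>?S. (v, s) \<in> (edge_rel E V)\<^sup>*"
    proof
      fix v assume "v \<in> V"
      then obtain s where "s \<in> S" "(v, s) \<in> (edge_rel E V)\<^sup>*" using Suc.prems(2) by blast
      then show "\<exists>s\<in>?S. (v, s) \<in> (edge_rel E V)\<^sup>*" by blast
    qed
  qed
  then have "n \<le> card {e\<in>E. e \<subseteq> V \<and> \<not> e \<subseteq> ?S}" using c by simp
  also have "\<dots> \<le> card ({e\<in>E. e \<subseteq> V \<and> \<not> e \<subseteq> S} - {{a,b}})"
    by (rule card_mono) (use assms ab in auto)
  also have "\<dots> = card {e\<in>E. e \<subseteq> V \<and> \<not> e \<subseteq> S} - 1"
  proof (rule card_Diff_singleton)
    show "{a, b} \<in> {e\<in>E. e \<subseteq> V \<and> \<not> e \<subseteq> S}" using ab by simp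
  qed
  finally have "n \<le> card {e\<in>E. e \<subseteq> V \<and> \<not> e \<subseteq> S} - 1" .
  moreover have "card {e\<in>E. e \<subseteq> V \<and> \<not> e \<subseteq> S} > 0"
  proof (subst card_gt_0_iff, intro conjI)
    show "{e\<in>E. e \<subseteq> V \<and> \<not> e \<subseteq> S} \<noteq> {}" using ab by blast
  qed (use assms in auto)
  ultimately show ?case using Suc.hyps(2) by linarith
qed


lemma tree_parts:
  assumes "is_tree N E"
  shows "finite N" "N \<noteq> {}" "\<forall>e\<in>E. \<exists>a b. a \<in> N \<and> b \<in> N \<and> a \<noteq> b \<and> e = {a, b}"
    "connected_in E N" "card E = card N - 1"
  using assms unfolding is_tree_def by simp_all

lemma tree_edges: "is_tree N E \<Longrightarrow> e \<in> E \<Longrightarrow> \<exists>a b. a \<in> N \<and> b \<in> N \<and> a \<noteq> b \<and> e = {a, b}"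
  by (rule bspec[OF tree_parts(3)])

lemma tree_finE: "is_tree N E \<Longrightarrow> finite E"
proof -
  assume t: "is_tree N E"
  have "E \<subseteq> Pow N" using tree_edges[OF t] by fastforce
  moreover have "finite N" using tree_parts[OF t] by blast
  ultimately show ?thesis using finite_subset by blast
qed

lemma tree_le:
  assumes t: "is_tree N E" and S: "S \<subseteq> N" "S \<noteq> {}"
  shows "int (card (ein E S)) \<le> int (card S) - 1"
proof -
  have fN: "finite N" and fE: "finite E" using tree_parts[OF t] tree_finE[OF t] by auto
  have cE: "card E = card N - 1" and ne: "N \<noteq> {}" using tree_parts[OF t] by auto
  have cN: "connected_in E N" using tree_parts[OF t] by simp
  obtain s0 where s0: "s0 \<in> S" using S by blast
  have conn: "\<forall>v\<in>N. \<exists>s\<in>S. (v, s) \<in> (edge_rel E N)\<^sup>*"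
  proof
    fix v assume "v \<in> N"
    then have "(v, s0) \<in> (edge_rel E N)\<^sup>*" using cN s0 S(1) unfolding connected_in_def by blast
    then show "\<exists>s\<in>S. (v, s) \<in> (edge_rel E N)\<^sup>*" using s0 by blast
  qed
  have "card (N - S) \<le> card {e\<in>E. e \<subseteq> N \<and> \<not> e \<subseteq> S}"
    using count_lemma[OF fE fN S(1) conn] .
  moreover have "{e\<in>E. e \<subseteq> N \<and> \<not> e \<subseteq> S} = E - ein E S"
  proof -
    have "e \<subseteq> N" if "e \<in> E" for e using tree_edges[OF t that] by auto
    then show ?thesis unfolding ein_def by blast
  qed
  moreover have "card (E - ein E S) = card E - card (ein E S)"
    by (rule card_Diff_subset) (use fE in \<open>auto simp: ein_def intro: finite_subset\<close>)
  moreover have "card (ein E S) \<le> card E"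
    by (rule card_mono) (use fE in \<open>auto simp: ein_def\<close>)
  moreover have "card (N - S) = card N - card S" using S fN by (simp add: card_Diff_subset finite_subset)
  moreover have "card S \<le> card N" "card S > 0" using S fN by (auto simp: card_mono finite_subset card_gt_0_iff)
  moreover have "card N > 0" using fN ne by (simp add: card_gt_0_iff)
  ultimately have "card N - card S \<le> card E - card (ein E S)" by simp
  then show ?thesis using cE \<open>card (ein E S) \<le> card E\<close> \<open>card S > 0\<close> \<open>card S \<le> card N\<close> by linarith
qed

lemma conn_ge:
  assumes t: "is_tree N E" and S: "S \<subseteq> N" "s \<in> S" and c: "connected_in E S"
  shows "int (card S) - 1 \<le> int (card (ein E S))"
proof -
  have fN: "finite N" and fE: "finite E" using tree_parts[OF t] tree_finE[OF t] by auto
  have fS: "finite S" using fN S finite_subset by blast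
  have conn: "\<forall>v\<in>S. \<exists>s'\<in>{s}. (v, s') \<in> (edge_rel E S)\<^sup>*"
    using c S unfolding connected_in_def by blast
  have "card (S - {s}) \<le> card {e\<in>E. e \<subseteq> S \<and> \<not> e \<subseteq> {s}}"
    using count_lemma[OF fE fS _ conn] S by blast
  also have "\<dots> \<le> card (ein E S)"
    by (rule card_mono) (use fE in \<open>auto simp: ein_def\<close>)
  finally show ?thesis using S fS by (simp add: card_Diff_singleton)
qed

lemma conn_union:
  assumes "connected_in E A" "connected_in E B" "A \<inter> B \<noteq> {}"
  shows "connected_in E (A \<union> B)"
proof -
  obtain p where p: "p \<in> A" "p \<in> B" using assms(3) by blast
  have mA: "(edge_rel E A)\<^sup>* \<subseteq> (edge_rel E (A \<union> B))\<^sup>*"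
    by (rule rtrancl_mono) (auto simp: edge_rel_def)
  have mB: "(edge_rel E B)\<^sup>* \<subseteq> (edge_rel E (A \<union> B))\<^sup>*"
    by (rule rtrancl_mono) (auto simp: edge_rel_def)
  have toP: "(u, p) \<in> (edge_rel E (A \<union> B))\<^sup>*" if "u \<in> A \<union> B" for u
    using that p assms(1,2) mA mB unfolding connected_in_def by blast
  have fromP: "(p, u) \<in> (edge_rel E (A \<union> B))\<^sup>*" if "u \<in> A \<union> B" for u
    using that p assms(1,2) mA mB unfolding connected_in_def by blast
  show ?thesis unfolding connected_in_def
    using toP fromP by (meson rtrancl_trans)
qed

lemma ein_fin: "is_tree N E \<Longrightarrow> finite (ein E S)"
  using tree_finE unfolding ein_def by auto

lemma lemG:
  assumes t: "is_tree N E" and AB: "A \<subseteq> N" "B \<subseteq> N" and cA: "connected_in E A"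
    and cB: "connected_in E B" and ne: "A \<inter> B \<noteq> {}"
  shows "ein E (A \<union> B) = ein E A \<union> ein E B"
    and "int (card (A \<inter> B)) - 1 \<le> int (card (ein E (A \<inter> B)))"
proof -
  obtain p where p: "p \<in> A" "p \<in> B" using ne by blast
  have fN: "finite N" using tree_parts[OF t] by auto
  have fA: "finite A" "finite B" using AB fN finite_subset by auto
  have U: "connected_in E (A \<union> B)" using conn_union[OF cA cB ne] .
  have eU: "int (card (ein E (A \<union> B))) \<le> int (card (A \<union> B)) - 1"
    by (rule tree_le[OF t]) (use AB p in auto)
  have eA: "int (card A) - 1 \<le> int (card (ein E A))" using conn_ge[OF t AB(1) p(1) cA] .
  have eB: "int (card B) - 1 \<le> int (card (ein E B))" using conn_ge[OF t AB(2) p(2) cB] .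
  have eAB: "int (card (ein E (A \<inter> B))) \<le> int (card (A \<inter> B)) - 1"
    by (rule tree_le[OF t]) (use AB ne in auto)
  have I: "ein E A \<inter> ein E B = ein E (A \<inter> B)" unfolding ein_def by blast
  have cX: "card (ein E A \<union> ein E B) + card (ein E (A \<inter> B)) = card (ein E A) + card (ein E B)"
    using card_Un_Int[OF ein_fin[OF t] ein_fin[OF t], of A B] I by simp
  have cU: "card (A \<union> B) + card (A \<inter> B) = card A + card B"
    using card_Un_Int[OF fA] by simp
  have sub: "ein E A \<union> ein E B \<subseteq> ein E (A \<union> B)" unfolding ein_def by blast
  have le: "card (ein E A \<union> ein E B) \<le> card (ein E (A \<union> B))"
    by (rule card_mono[OF ein_fin[OF t] sub])
  have cX': "int (card (ein E A \<union> ein E B)) + int (card (ein E (A \<inter> B))) = int (card (ein E A)) + int (card (ein E B))"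
  proof -
    have "int (card (ein E A \<union> ein E B) + card (ein E (A \<inter> B))) = int (card (ein E A) + card (ein E B))"
      using cX by (rule arg_cong)
    then show ?thesis by simp
  qed
  have cU': "int (card (A \<union> B)) + int (card (A \<inter> B)) = int (card A) + int (card B)"
  proof -
    have "int (card (A \<union> B) + card (A \<inter> B)) = int (card A + card B)"
      using cU by (rule arg_cong)
    then show ?thesis by simp
  qed
  have "int (card (ein E (A \<union> B))) \<le> int (card (ein E A \<union> ein E B))"
    using cX' cU' eU eA eB eAB by linarith
  then have "card (ein E (A \<union> B)) \<le> card (ein E A \<union> ein E B)" by simp
  then have "card (ein E A \<union> ein E B) = card (ein E (A \<union> B))" using le by simp
  then have "ein E A \<union> ein E B = ein E (A \<union> B)" by (rule card_subset_eq[OF ein_fin[OF t] sub])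
  then show "ein E (A \<union> B) = ein E A \<union> ein E B" by (rule sym)
  show "int (card (A \<inter> B)) - 1 \<le> int (card (ein E (A \<inter> B)))"
    using cX' cU' eU eA eB le by linarith
qed

lemma helly:
  assumes t: "is_tree N E" and S: "A \<subseteq> N" "B \<subseteq> N" "C \<subseteq> N"
    and c: "connected_in E A" "connected_in E B" "connected_in E C"
    and ne: "A \<inter> B \<noteq> {}" "A \<inter> C \<noteq> {}" "B \<inter> C \<noteq> {}"
  shows "A \<inter> B \<inter> C \<noteq> {}"
proof
  assume empty: "A \<inter> B \<inter> C = {}"
  have fN: "finite N" using tree_parts[OF t] by auto
  let ?D = "A \<union> B"
  have cD: "connected_in E ?D" using conn_union[OF c(1,2) ne(1)] .
  have neD: "?D \<inter> C \<noteq> {}" using ne by blast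
  have g1: "int (card (?D \<inter> C)) - 1 \<le> int (card (ein E (?D \<inter> C)))"
    by (rule lemG(2)[OF t _ S(3) cD c(3) neD]) (use S in auto)
  have g2: "ein E ?D = ein E A \<union> ein E B" using lemG(1)[OF t S(1,2) c(1,2) ne(1)] .
  have sub: "ein E (?D \<inter> C) \<subseteq> ein E (A \<inter> C) \<union> ein E (B \<inter> C)"
  proof
    fix e assume e: "e \<in> ein E (?D \<inter> C)"
    then have "e \<in> ein E ?D" unfolding ein_def by blast
    then have "e \<in> ein E A \<union> ein E B" using g2 by simp
    then show "e \<in> ein E (A \<inter> C) \<union> ein E (B \<inter> C)" using e unfolding ein_def by blast
  qed
  have "card (ein E (?D \<inter> C)) \<le> card (ein E (A \<inter> C) \<union> ein E (B \<inter> C))"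
    by (rule card_mono[OF _ sub]) (use ein_fin[OF t] in auto)
  also have "\<dots> \<le> card (ein E (A \<inter> C)) + card (ein E (B \<inter> C))" by (rule card_Un_le)
  finally have h: "card (ein E (?D \<inter> C)) \<le> card (ein E (A \<inter> C)) + card (ein E (B \<inter> C))" .
  have l1: "int (card (ein E (A \<inter> C))) \<le> int (card (A \<inter> C)) - 1"
    by (rule tree_le[OF t]) (use S ne in auto)
  have l2: "int (card (ein E (B \<inter> C))) \<le> int (card (B \<inter> C)) - 1"
    by (rule tree_le[OF t]) (use S ne in auto)
  have "?D \<inter> C = (A \<inter> C) \<union> (B \<inter> C)" by blast
  moreover have "(A \<inter> C) \<inter> (B \<inter> C) = {}" using empty by blast
  moreover have "finite (A \<inter> C)" using S fN finite_subset by blast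
  moreover have "finite (B \<inter> C)" using S fN finite_subset by blast
  ultimately have "card (?D \<inter> C) = card (A \<inter> C) + card (B \<inter> C)" by (simp add: card_Un_disjoint)
  then have "int (card (?D \<inter> C)) = int (card (A \<inter> C)) + int (card (B \<inter> C))" by simp
  moreover have "int (card (ein E (?D \<inter> C))) \<le> int (card (ein E (A \<inter> C))) + int (card (ein E (B \<inter> C)))"
    using h by linarith
  ultimately show False using g1 l1 l2 by linarith
qed


lemma inf_ge1:
  fixes f :: "'a \<Rightarrow> real"
  assumes "\<And>w. P w \<Longrightarrow> c \<le> f w" "P ww"
  shows "c \<le> Inf {f w | w. P w}"
proof (rule cInf_greatest)
  show "{f w | w. P w} \<noteq> {}" using assms(2) by blast
next
  fix r assume "r \<in> {f w | w. P w}"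
  then show "c \<le> r" using assms(1) by blast
qed

lemma inf_ge3:
  fixes f :: "'a \<Rightarrow> 'b \<Rightarrow> 'c \<Rightarrow> real"
  assumes "\<And>a b d. P a b d \<Longrightarrow> c \<le> f a b d" "P aa bb dd"
  shows "c \<le> Inf {f a b d | a b d. P a b d}"
proof (rule cInf_greatest)
  show "{f a b d | a b d. P a b d} \<noteq> {}" using assms(2) by blast
next
  fix r assume "r \<in> {f a b d | a b d. P a b d}"
  then show "c \<le> r" using assms(1) by blast
qed

lemma fec_ge:
  assumes B: "u \<in> B" "v \<in> B" "z \<in> B" "B \<subseteq> qvars P"
    and no3: "\<forall>p<length P. \<not> (u \<in> P ! p \<and> v \<in> P ! p \<and> z \<in> P ! p)"
  shows "3 / 2 \<le> frac_edge_cover P B"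
  unfolding frac_edge_cover_def
proof (rule inf_ge1[where P = "\<lambda>w. (\<forall>i. 0 \<le> w i) \<and>
      (\<forall>x\<in>B. (\<Sum>i\<in>{i. i < length P \<and> x \<in> P ! i \<inter> B}. w i) \<ge> 1)"
    and f = "\<lambda>w. \<Sum>i<length P. w i" and ww = "\<lambda>_. 1"])
  let ?n = "length P"
  have feas1: "\<forall>x\<in>B. (\<Sum>i\<in>{i. i < ?n \<and> x \<in> P ! i \<inter> B}. (1::real)) \<ge> 1"
  proof
    fix x assume x: "x \<in> B"
    then have "x \<in> \<Union> (set P)" using B(4) unfolding qvars_def by blast
    then obtain A where A: "A \<in> set P" "x \<in> A" by blast
    then obtain i where i0: "i < ?n" "P ! i = A" by (auto simp: in_set_conv_nth)
    have i: "i < ?n" "x \<in> P ! i" using i0 A by auto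
    have fin: "finite {i. i < ?n \<and> x \<in> P ! i \<inter> B}" by simp
    have "i \<in> {i. i < ?n \<and> x \<in> P ! i \<inter> B}" using i x by simp
    then have "card {i. i < ?n \<and> x \<in> P ! i \<inter> B} > 0"
      by (subst card_gt_0_iff) (use fin in blast)
    then have "card {i. i < ?n \<and> x \<in> P ! i \<inter> B} \<ge> 1" by simp
    then show "(\<Sum>i\<in>{i. i < ?n \<and> x \<in> P ! i \<inter> B}. (1::real)) \<ge> 1" by simp
  qed
  then show "(\<forall>i. 0 \<le> (\<lambda>_. 1::real) i) \<and>
      (\<forall>x\<in>B. (\<Sum>i\<in>{i. i < length P \<and> x \<in> P ! i \<inter> B}. (\<lambda>_. 1::real) i) \<ge> 1)" by simp
next
  fix w :: "nat \<Rightarrow> real"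
  assume "(\<forall>i. 0 \<le> w i) \<and>
      (\<forall>x\<in>B. (\<Sum>i\<in>{i. i < length P \<and> x \<in> P ! i \<inter> B}. w i) \<ge> 1)"
  then have w0: "\<forall>i. 0 \<le> w i"
    and cov: "\<forall>x\<in>B. (\<Sum>i\<in>{i. i < length P \<and> x \<in> P ! i \<inter> B}. w i) \<ge> 1" by auto
  let ?n = "length P"
  have eq: "(\<Sum>i\<in>{i. i < ?n \<and> x \<in> P ! i \<inter> B}. w i) = (\<Sum>i<?n. if x \<in> P ! i then w i else 0)"
    if "x \<in> B" for x
  proof -
    have "{i. i < ?n \<and> x \<in> P ! i \<inter> B} = {i \<in> {..<?n}. x \<in> P ! i}" using that by auto
    then show ?thesis using sum.inter_filter[of "{..<?n}" w "\<lambda>i. x \<in> P ! i"] by simp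
  qed
  have "1 \<le> (\<Sum>i\<in>{i. i < ?n \<and> u \<in> P ! i \<inter> B}. w i)" using cov B(1) by blast
  then have cu: "(\<Sum>i<?n. if u \<in> P ! i then w i else 0) \<ge> 1" using eq[OF B(1)] by simp
  have "1 \<le> (\<Sum>i\<in>{i. i < ?n \<and> v \<in> P ! i \<inter> B}. w i)" using cov B(2) by blast
  then have cv: "(\<Sum>i<?n. if v \<in> P ! i then w i else 0) \<ge> 1" using eq[OF B(2)] by simp
  have "1 \<le> (\<Sum>i\<in>{i. i < ?n \<and> z \<in> P ! i \<inter> B}. w i)" using cov B(3) by blast
  then have cz: "(\<Sum>i<?n. if z \<in> P ! i then w i else 0) \<ge> 1" using eq[OF B(3)] by simp
  have "(\<Sum>i<?n. if u \<in> P ! i then w i else 0) + (\<Sum>i<?n. if v \<in> P ! i then w i else 0)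
      + (\<Sum>i<?n. if z \<in> P ! i then w i else 0)
      = (\<Sum>i<?n. (if u \<in> P ! i then w i else 0) + (if v \<in> P ! i then w i else 0)
          + (if z \<in> P ! i then w i else 0))"
    by (simp add: sum.distrib)
  also have "\<dots> \<le> (\<Sum>i<?n. 2 * w i)"
  proof (rule sum_mono)
    fix i assume "i \<in> {..<?n}"
    then have "\<not> (u \<in> P ! i \<and> v \<in> P ! i \<and> z \<in> P ! i)" using no3 by simp
    then show "(if u \<in> P ! i then w i else 0) + (if v \<in> P ! i then w i else 0)
          + (if z \<in> P ! i then w i else 0) \<le> 2 * w i"
      using w0[rule_format, of i] by auto
  qed
  also have "\<dots> = 2 * (\<Sum>i<?n. w i)" by (simp add: sum_distrib_left)
  finally show "3 / 2 \<le> (\<lambda>w. \<Sum>i<length P. w i) w" using cu cv cz by simp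
qed

lemma single_decomp: "is_tree_decomp P {0} {} (\<lambda>_. qvars P)"
proof -
  have c: "connected_in {} S" if "S \<subseteq> {0}" for S
    unfolding connected_in_def using that by auto
  have "is_tree {0} {}" unfolding is_tree_def using c[of "{0}"] by simp
  moreover have "\<forall>A\<in>set P. \<exists>t\<in>{0}. A \<subseteq> qvars P" unfolding qvars_def by blast
  moreover have "\<forall>x. connected_in {} {t\<in>{0::nat}. x \<in> qvars P}"
  proof
    fix x show "connected_in {} {t\<in>{0::nat}. x \<in> qvars P}" by (rule c) auto
  qed
  ultimately show ?thesis unfolding is_tree_decomp_def by simp
qed

lemma fhw_ge:
  assumes p1: "p1 < length P" "u \<in> P ! p1" "v \<in> P ! p1"
    and p2: "p2 < length P" "u \<in> P ! p2" "z \<in> P ! p2"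
    and p3: "p3 < length P" "v \<in> P ! p3" "z \<in> P ! p3"
    and no3: "\<forall>p<length P. \<not> (u \<in> P ! p \<and> v \<in> P ! p \<and> z \<in> P ! p)"
  shows "3 / 2 \<le> fhw P"
  unfolding fhw_def
proof (rule inf_ge3[where P = "\<lambda>N E bag. is_tree_decomp P N E bag"
    and f = "\<lambda>N E bag. Max ((\<lambda>t. frac_edge_cover P (bag t)) ` N)"
    and aa = "{0}" and bb = "{}" and dd = "\<lambda>_. qvars P"])
  show "is_tree_decomp P {0} {} (\<lambda>_. qvars P)" by (rule single_decomp)
next
  fix N E bag assume d: "is_tree_decomp P N E bag"
  have t: "is_tree N E" and bq: "\<forall>t\<in>N. bag t \<subseteq> qvars P"
    and cov: "\<forall>A\<in>set P. \<exists>t\<in>N. A \<subseteq> bag t"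
    and con: "\<forall>x. connected_in E {t\<in>N. x \<in> bag t}"
    using d unfolding is_tree_decomp_def by auto
  have fN: "finite N" using tree_parts[OF t] by simp
  have pair: "{t\<in>N. a \<in> bag t} \<inter> {t\<in>N. b \<in> bag t} \<noteq> {}"
    if "p < length P" "a \<in> P ! p" "b \<in> P ! p" for p a b
  proof -
    have "P ! p \<in> set P" using that(1) by simp
    then obtain t where "t \<in> N" "P ! p \<subseteq> bag t" using cov by blast
    then show ?thesis using that by blast
  qed
  have "{t\<in>N. u \<in> bag t} \<inter> {t\<in>N. v \<in> bag t} \<inter> {t\<in>N. z \<in> bag t} \<noteq> {}"
    by (rule helly[OF t _ _ _ con[rule_format] con[rule_format] con[rule_format]
          pair[OF p1] pair[OF p2] pair[OF p3]]) auto
  then obtain t where tN: "t \<in> N" and uvz: "u \<in> bag t" "v \<in> bag t" "z \<in> bag t" by blast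
  have "3 / 2 \<le> frac_edge_cover P (bag t)"
    by (rule fec_ge[OF uvz _ no3]) (use bq tN in blast)
  also have "\<dots> \<le> Max ((\<lambda>t. frac_edge_cover P (bag t)) ` N)" by (rule Max_ge) (use fN tN in auto)
  finally show "3 / 2 \<le> Max ((\<lambda>t. frac_edge_cover P (bag t)) ` N)" .
qed


theorem mainTheorem8:
  fixes Q :: "'v query"
  assumes "\<forall>A\<in>set Q. finite A"
    and "\<not> hierarchical Q"
  shows "fhw_mv_ext Q \<ge> 3 / 2"
proof -
  let ?n = "length Q"
  obtain x y where nx: "\<not> atoms_of Q x \<subseteq> atoms_of Q y" and ny: "\<not> atoms_of Q y \<subseteq> atoms_of Q x"
    and nxy: "atoms_of Q x \<inter> atoms_of Q y \<noteq> {}"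
    using assms(2) unfolding hierarchical_def by blast
  obtain j where j: "j < ?n" "x \<in> Q ! j" "y \<notin> Q ! j" using nx unfolding atoms_of_def by blast
  obtain k where k: "k < ?n" "y \<in> Q ! k" "x \<notin> Q ! k" using ny unfolding atoms_of_def by blast
  obtain i where i: "i < ?n" "x \<in> Q ! i" "y \<in> Q ! i" using nxy unfolding atoms_of_def by blast
  define prd where "prd = (\<lambda>i. x \<in> Q ! i \<and> y \<in> Q ! i)"
  define L1 where "L1 = filter prd [0..<?n]"
  define L2 where "L2 = filter (\<lambda>i. \<not> prd i) [0..<?n]"
  define L where "L = L1 @ L2"
  define a where "a = length L1"
  define \<sigma> where "\<sigma> = (\<lambda>p. if p < ?n then L ! p else p)"
  have len: "length L = ?n" unfolding L_def L1_def L2_def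
    using sum_length_filter_compl[of prd "[0..<?n]"] by simp
  have an: "a \<le> ?n" using len unfolding L_def a_def by simp
  have dist: "distinct L" unfolding L_def L1_def L2_def by auto
  have setL: "set L = {..<?n}" unfolding L_def L1_def L2_def by auto
  have bijL: "bij_betw ((!) L) {..<?n} {..<?n}"
    by (rule bij_betw_nth[OF dist]) (use len setL in auto)
  have "bij_betw \<sigma> {..<?n} {..<?n}"
    using bijL by (subst bij_betw_cong[where g = "(!) L"]) (auto simp: \<sigma>_def)
  then have perm: "\<sigma> permutes {..<?n}"
    by (rule bij_imp_permutes) (auto simp: \<sigma>_def)
  have lt: "prd (\<sigma> p)" if "p < a" for p
  proof -
    have "p < ?n" using that an by simp
    then have "\<sigma> p = L1 ! p" unfolding \<sigma>_def L_def using that a_def by (simp add: nth_append)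
    moreover have "L1 ! p \<in> set L1" using that a_def by simp
    ultimately show ?thesis unfolding L1_def by simp
  qed
  have ge: "\<not> prd (\<sigma> p)" if "a \<le> p" "p < ?n" for p
  proof -
    have "\<sigma> p = L2 ! (p - a)" unfolding \<sigma>_def L_def using that a_def by (simp add: nth_append)
    moreover have "p - a < length L2" using that len unfolding L_def a_def by simp
    then have "L2 ! (p - a) \<in> set L2" by simp
    ultimately show ?thesis unfolding L2_def by simp
  qed
  have surj: "\<exists>p<?n. \<sigma> p = q" if "q < ?n" for q
  proof -
    have "q \<in> set L" using that setL by simp
    then obtain p where "p < length L" "L ! p = q" by (auto simp: in_set_conv_nth)
    then show ?thesis unfolding \<sigma>_def using len by auto
  qed
  define P where "P = mv_component Q \<sigma>"
  have lenP: "length P = ?n" unfolding P_def mv_component_def by simp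
  have Pp: "P ! p = Inr ` {..p} \<union> Inl ` (Q ! \<sigma> p)" if "p < ?n" for p
    unfolding P_def mv_component_def using that by simp
  have inl: "Inl w \<in> P ! p \<longleftrightarrow> w \<in> Q ! \<sigma> p" if "p < ?n" for p w
    using Pp[OF that] by auto
  have inr: "Inr b \<in> P ! p \<longleftrightarrow> b \<le> p" if "p < ?n" for p b
    using Pp[OF that] by auto
  obtain p1 where p1: "p1 < ?n" "\<sigma> p1 = i" using surj i(1) by blast
  obtain p2 where p2: "p2 < ?n" "\<sigma> p2 = j" using surj j(1) by blast
  obtain p3 where p3: "p3 < ?n" "\<sigma> p3 = k" using surj k(1) by blast
  have a2: "a \<le> p2"
  proof (rule ccontr)
    assume "\<not> a \<le> p2"
    then have "prd (\<sigma> p2)" using lt by simp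
    then show False using p2 j unfolding prd_def by simp
  qed
  have a3: "a \<le> p3"
  proof (rule ccontr)
    assume "\<not> a \<le> p3"
    then have "prd (\<sigma> p3)" using lt by simp
    then show False using p3 k unfolding prd_def by simp
  qed
  have "3 / 2 \<le> fhw P"
  proof (rule fhw_ge[where u = "Inl x" and v = "Inl y" and z = "Inr a"])
    show "p1 < length P" "Inl x \<in> P ! p1" "Inl y \<in> P ! p1"
      using p1 i lenP inl by auto
    show "p2 < length P" "Inl x \<in> P ! p2" "Inr a \<in> P ! p2"
      using p2 j lenP inl inr a2 by auto
    show "p3 < length P" "Inl y \<in> P ! p3" "Inr a \<in> P ! p3"
      using p3 k lenP inl inr a3 by auto
    show "\<forall>p<length P. \<not> (Inl x \<in> P ! p \<and> Inl y \<in> P ! p \<and> Inr a \<in> P ! p)"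
    proof (intro allI impI notI)
      fix p assume p: "p < length P" and h: "Inl x \<in> P ! p \<and> Inl y \<in> P ! p \<and> Inr a \<in> P ! p"
      then have pn: "p < ?n" using lenP by simp
      then have "a \<le> p" using h inr by blast
      then have "\<not> prd (\<sigma> p)" using ge pn by blast
      moreover have "prd (\<sigma> p)" using h inl[OF pn] unfolding prd_def by blast
      ultimately show False by blast
    qed
  qed
  also have "fhw P \<le> fhw_mv_ext Q"
    unfolding fhw_mv_ext_def
  proof (rule Max_ge)
    have "{fhw (mv_component Q \<sigma>) |\<sigma>. \<sigma> permutes {..<?n}}
        = (\<lambda>\<sigma>. fhw (mv_component Q \<sigma>)) ` {\<sigma>. \<sigma> permutes {..<?n}}" by blast
    then show "finite {fhw (mv_component Q \<sigma>) |\<sigma>. \<sigma> permutes {..<?n}}"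
      using finite_permutations[of "{..<?n}"] by simp
    show "fhw P \<in> {fhw (mv_component Q \<sigma>) |\<sigma>. \<sigma> permutes {..<?n}}"
      unfolding P_def using perm by blast
  qed
  finally show ?thesis .
qed

end
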